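(* Assume (A1). For every $\lambda\in\mathcal I$, $n\ge1$ and $\epsilon\in(0,1)$, with $\mathbb P$-probability at least $1-\epsilon$, $$ \varrho_\lambda(\mathbb PD_n^S)\le\inf_{\varrho}\Big\{\varrho(\mathbb PD_n^S)+\frac2\lambda\mathcal K(\varrho,\pi_\theta\pi)\Big\}+\frac{2f(n,\lambda)}{\lambda}+\frac2\lambda\log\frac2\epsilon, $$ where the infimum is over all probability measures $\varrho$ on $\Theta\times\mathcal X^n$ and $\varrho(\mathbb PD_n^S)=\int\!\int d(S(X^n),S(y^n))\mathbb P(dy^n)\varrho(d\theta,dX^n)$.
   Context: Setting. $Y^n=(Y_1,\dots,Y_n)$ is the observed sample, i.i.d. on a space $\mathcal Y$; its law on $\mathcal Y^n$ is denoted $\mathbb P$. $\Theta$ carries a prior probability measure $\pi$, and $\{\pi_\theta:\theta\in\Theta\}$ is a measurable family of probability measures on $\mathcal X^n$; $\pi_\theta\pi$ denotes the joint law $\pi(d\theta)\pi_\theta(dX^n)$. $S:\mathcal X^n\cup\mathcal Y^n\to\mathcal S$ is a summary statistic into a metric space $(\mathcal S,d)$. $D_n^S=d(S(X^n),S(Y^n))$, $\mathbb P D_n^S=\int d(S(X^n),S(y^n))\mathbb P(dy^n)$. $\mathcal K$ is the Kullback–Leibler divergence. For $\lambda>0$ the ABC pseudo-posterior is $\varrho_\lambda(d\theta,dX^n)=Z_{\lambda,\pi}^{-1}e^{-\lambda d(S(X^n),S(Y^n))}\pi_\theta(dX^n)\pi(d\theta)$ with $Z_{\lambda,\pi}=\int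 e^{-\lambda d(S(X^n),S(Y^n))}\pi_\theta(dX^n)\pi(d\theta)$. $\mathcal I\subset(0,\infty)$. (A1) There is $f:\mathbb N\times\mathcal I\to[0,\infty)$ such that for all $\lambda\in\mathcal I$: $\int\!\!\int\!\!\int e^{-\lambda(D_n^S-\mathbb PD_n^S)}\,\mathbb P(dY^n)\pi_\theta(dX^n)\pi(d\theta)\le e^{f(n,\lambda)}$ and the same with $e^{-\lambda(\mathbb PD_n^S-D_n^S)}$. *)

theory Defs
  imports "HOL-Probability.Probability"
begin

definition KLdiv :: "'a measure \<Rightarrow> 'a measure \<Rightarrow> ennreal" where
  "KLdiv rho mu =
     (if absolutely_continuous mu rho \<and> sets rho = sets mu
         \<and> integrable rho (entropy_density (exp 1) mu rho)
      then ennreal (KL_divergence (exp 1) mu rho) else \<infinity>)"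

definition joint :: "'t measure \<Rightarrow> ('t \<Rightarrow> 'x measure) \<Rightarrow> 'x measure \<Rightarrow> ('t \<times> 'x) measure" where
  "joint prior K MX = prior \<bind> (\<lambda>\<theta>. K \<theta> \<bind> (\<lambda>x. return (prior \<Otimes>\<^sub>M MX) (\<theta>, x)))"

definition PD :: "'y measure \<Rightarrow> ('x \<Rightarrow> 's::metric_space) \<Rightarrow> ('y \<Rightarrow> 's) \<Rightarrow> 'x \<Rightarrow> ennreal" where
  "PD P SX SY x = (\<integral>\<^sup>+ y. ennreal (dist (SX x) (SY y)) \<partial>P)"

definition exp_neg_shift :: "real \<Rightarrow> real \<Rightarrow> ennreal \<Rightarrow> ennreal" where
  "exp_neg_shift l a b = (if b = \<infinity> then 0 else ennreal (exp (- l * (a - enn2real b))))"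

definition exp_pos_shift :: "real \<Rightarrow> real \<Rightarrow> ennreal \<Rightarrow> ennreal" where
  "exp_pos_shift l a b = (if b = \<infinity> then \<infinity> else ennreal (exp (- l * (enn2real b - a))))"

definition Zconst :: "('t \<times> 'x) measure \<Rightarrow> ('x \<Rightarrow> 's::metric_space) \<Rightarrow> ('y \<Rightarrow> 's) \<Rightarrow> real \<Rightarrow> 'y \<Rightarrow> ennreal" where
  "Zconst J SX SY l y = (\<integral>\<^sup>+ z. ennreal (exp (- l * dist (SX (snd z)) (SY y))) \<partial>J)"

definition abc_post :: "('t \<times> 'x) measure \<Rightarrow> ('x \<Rightarrow> 's::metric_space) \<Rightarrow> ('y \<Rightarrow> 's) \<Rightarrow> real \<Rightarrow> 'y \<Rightarrow> ('t \<times> 'x) measure" where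
  "abc_post J SX SY l y =
     density J (\<lambda>z. ennreal (exp (- l * dist (SX (snd z)) (SY y))) / Zconst J SX SY l y)"

end

theory Submission
  imports Defs
begin


lemma fenchel:
  fixes q t :: real assumes "0 \<le> q"
  shows "t * q \<le> q * ln q - q + exp t"
proof (cases "q = 0")
  case True then show ?thesis by simp
next
  case False
  then have q: "q > 0" using assms by simp
  have "1 + (t - ln q) \<le> exp (t - ln q)" by (rule exp_ge_add_one_self)
  also have "\<dots> = exp t / q" using q by (simp add: exp_diff)
  finally have "q * (1 + (t - ln q)) \<le> q * (exp t / q)" using q by (intro mult_left_mono) auto
  then show ?thesis using q by (simp add: algebra_simps)
qed

lemma S2:
  fixes M :: "'a measure" and D p r :: "'a \<Rightarrow> real"
  assumes M: "prob_space M"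
    and [measurable]: "D \<in> borel_measurable M" "p \<in> borel_measurable M" "r \<in> borel_measurable M"
    and Dnn: "\<And>z. 0 \<le> D z" and rnn: "\<And>z. 0 \<le> r z"
    and lam: "0 < lam" and c: "1 \<le> c"
    and rint: "integral\<^sup>L M r = 1" "integrable M r"
    and rp: "integrable M (\<lambda>z. r z * p z)"
    and rl: "integrable M (\<lambda>z. r z * ln (r z))"
    and B2: "(\<integral>\<^sup>+ z. ennreal (exp (lam * (D z - p z))) \<partial>M) \<le> ennreal c"
  shows "- ln (integral\<^sup>L M (\<lambda>z. exp (- lam * D z))) \<le>
     lam * integral\<^sup>L M (\<lambda>z. r z * p z) + 2 * integral\<^sup>L M (\<lambda>z. r z * ln (r z)) + ln c"
proof -
  interpret prob_space M by fact
  define Zr where "Zr = integral\<^sup>L M (\<lambda>z. exp (- lam * D z))"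
  have eint: "integrable M (\<lambda>z. exp (- lam * D z))"
    by (rule integrable_const_bound[where B=1]) (use lam Dnn in \<open>auto simp: mult_nonneg_nonneg\<close>)
  have Zpos: "0 < Zr" unfolding Zr_def
    using integral_less_AE_space[of "\<lambda>_. 0" "\<lambda>z. exp (- lam * D z)"] eint emeasure_space_1 by simp
  have e2int: "integrable M (\<lambda>z. exp (lam * (D z - p z)))"
    by (rule integrableI_nonneg) (use B2 in \<open>auto simp: top_unique less_top[symmetric]\<close>)
  have e2le: "integral\<^sup>L M (\<lambda>z. exp (lam * (D z - p z))) \<le> c"
  proof -
    have "integral\<^sup>L M (\<lambda>z. exp (lam * (D z - p z))) = enn2real (\<integral>\<^sup>+ z. ennreal (exp (lam * (D z - p z))) \<partial>M)"
      by (rule integral_eq_nn_integral) auto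
    also have "\<dots> \<le> c" using B2 c by (simp add: enn2real_leI)
    finally show ?thesis .
  qed
  have pw: "(- lam * p z - ln Zr - ln c) * r z \<le> 2 * (r z * ln (r z)) - 2 * r z
      + exp (- lam * D z) / Zr + exp (lam * (D z - p z)) / c" for z
  proof -
    have 1: "(- lam * D z - ln Zr) * r z \<le> r z * ln (r z) - r z + exp (- lam * D z - ln Zr)"
      by (rule fenchel) (rule rnn)
    have 2: "(lam * (D z - p z) - ln c) * r z \<le> r z * ln (r z) - r z + exp (lam * (D z - p z) - ln c)"
      by (rule fenchel) (rule rnn)
    have e1: "exp (- lam * D z - ln Zr) = exp (- lam * D z) / Zr" using Zpos by (simp add: exp_diff)
    have e2: "exp (lam * (D z - p z) - ln c) = exp (lam * (D z - p z)) / c" using c by (simp add: exp_diff)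
    show ?thesis using 1 2 unfolding e1 e2 by (simp add: algebra_simps)
  qed
  have "integral\<^sup>L M (\<lambda>z. (- lam * p z - ln Zr - ln c) * r z) \<le> integral\<^sup>L M (\<lambda>z. 2 * (r z * ln (r z)) - 2 * r z
      + exp (- lam * D z) / Zr + exp (lam * (D z - p z)) / c)"
  proof (rule integral_mono[OF _ _ pw])
    have ii: "integrable M (\<lambda>z. - lam * (r z * p z) - (ln Zr + ln c) * r z)"
      using rp rint by auto
    then show "integrable M (\<lambda>z. (- lam * p z - ln Zr - ln c) * r z)"
    proof -
      have "(\<lambda>z. - lam * (r z * p z) - (ln Zr + ln c) * r z) = (\<lambda>z. (- lam * p z - ln Zr - ln c) * r z)"
        by (auto simp: algebra_simps)
      then show ?thesis using ii by simp
    qed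
    show "integrable M (\<lambda>z. 2 * (r z * ln (r z)) - 2 * r z + exp (- lam * D z) / Zr + exp (lam * (D z - p z)) / c)"
      using rl rint eint e2int by (intro Bochner_Integration.integrable_add Bochner_Integration.integrable_diff integrable_mult_right integrable_divide_zero) auto
  qed
  also have "\<dots> = 2 * integral\<^sup>L M (\<lambda>z. r z * ln (r z)) - 2 * integral\<^sup>L M r
      + integral\<^sup>L M (\<lambda>z. exp (- lam * D z)) / Zr + integral\<^sup>L M (\<lambda>z. exp (lam * (D z - p z))) / c"
  proof -
    have a: "integrable M (\<lambda>z. 2 * (r z * ln (r z)))" "integrable M (\<lambda>z. 2 * r z)"
      "integrable M (\<lambda>z. exp (- lam * D z) / Zr)" "integrable M (\<lambda>z. exp (lam * (D z - p z)) / c)"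
      using rl rint eint e2int by auto
    have b: "integrable M (\<lambda>z. 2 * (r z * ln (r z)) - 2 * r z)" using a by auto
    have c: "integrable M (\<lambda>z. 2 * (r z * ln (r z)) - 2 * r z + exp (- lam * D z) / Zr)" using a b by auto
    show ?thesis
      apply (subst Bochner_Integration.integral_add[OF c a(4)])
      apply (subst Bochner_Integration.integral_add[OF b a(3)])
      apply (subst Bochner_Integration.integral_diff[OF a(1) a(2)])
      apply simp
      done
  qed
  also have "\<dots> \<le> 2 * integral\<^sup>L M (\<lambda>z. r z * ln (r z)) - 2 + 1 + 1"
  proof -
    have "integral\<^sup>L M (\<lambda>z. exp (- lam * D z)) / Zr = 1" using Zpos unfolding Zr_def by simp
    moreover have "integral\<^sup>L M (\<lambda>z. exp (lam * (D z - p z))) / c \<le> 1" using c e2le by simp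
    ultimately show ?thesis using rint by simp
  qed
  finally have A: "integral\<^sup>L M (\<lambda>z. (- lam * p z - ln Zr - ln c) * r z) \<le> 2 * integral\<^sup>L M (\<lambda>z. r z * ln (r z))" by simp
  have "integral\<^sup>L M (\<lambda>z. (- lam * p z - ln Zr - ln c) * r z)
      = - lam * integral\<^sup>L M (\<lambda>z. r z * p z) - (ln Zr + ln c) * integral\<^sup>L M r"
  proof -
    have "(\<lambda>z. (- lam * p z - ln Zr - ln c) * r z) = (\<lambda>z. - lam * (r z * p z) - (ln Zr + ln c) * r z)"
      by (auto simp: algebra_simps)
    moreover have "integrable M (\<lambda>z. - lam * (r z * p z))" "integrable M (\<lambda>z. (ln Zr + ln c) * r z)"
      using rp rint by auto
    ultimately show ?thesis
      by (simp only: Bochner_Integration.integral_diff integral_mult_right_zero)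
  qed
  with A rint show ?thesis unfolding Zr_def[symmetric] by simp
qed

lemma S1:
  fixes M :: "'a measure" and D p :: "'a \<Rightarrow> real"
  assumes M: "prob_space M"
    and [measurable]: "D \<in> borel_measurable M" "p \<in> borel_measurable M"
    and Dnn: "\<And>z. 0 \<le> D z" and pnn: "\<And>z. 0 \<le> p z"
    and lam: "0 < lam" and c: "1 \<le> c"
    and B1: "(\<integral>\<^sup>+ z. ennreal (exp (lam * (p z - D z))) \<partial>M) \<le> ennreal c"
  shows "(\<integral>\<^sup>+ z. ennreal (exp (- lam * D z) / integral\<^sup>L M (\<lambda>z. exp (- lam * D z))) * ennreal (p z) \<partial>M)
     \<le> ennreal ((ln c - ln (integral\<^sup>L M (\<lambda>z. exp (- lam * D z)))) / lam)"
proof -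
  interpret prob_space M by fact
  define Zr where "Zr = integral\<^sup>L M (\<lambda>z. exp (- lam * D z))"
  have eint: "integrable M (\<lambda>z. exp (- lam * D z))"
    by (rule integrable_const_bound[where B=1]) (use lam Dnn in \<open>auto simp: mult_nonneg_nonneg\<close>)
  have Zpos: "0 < Zr" unfolding Zr_def
    using integral_less_AE_space[of "\<lambda>_. 0" "\<lambda>z. exp (- lam * D z)"] eint emeasure_space_1 by simp
  have Zle: "Zr \<le> 1" unfolding Zr_def
    using integral_mono[OF eint, of "\<lambda>_. 1"] lam Dnn prob_space by (simp add: mult_nonneg_nonneg)
  define L where "L = ln c - ln Zr"
  have L: "0 \<le> L" 
  proof -
    have "ln Zr \<le> 0" using Zpos Zle by simp
    moreover have "0 \<le> ln c" using c by simp
    ultimately show ?thesis unfolding L_def by simp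
  qed
  define q where "q z = exp (- lam * D z) / Zr" for z
  have qpos: "0 < q z" for z using Zpos by (simp add: q_def)
  have [measurable]: "q \<in> borel_measurable M" unfolding q_def by measurable
  have pw: "lam * p z * q z + q z \<le> q z * L + exp (lam * (p z - D z)) / c" for z
  proof -
    have 1: "(lam * (p z - D z) - ln c) * q z \<le> q z * ln (q z) - q z + exp (lam * (p z - D z) - ln c)"
      by (rule fenchel) (use qpos in \<open>auto intro: less_imp_le\<close>)
    have lq: "ln (q z) = - lam * D z - ln Zr" using Zpos by (simp add: q_def ln_div)
    have e: "exp (lam * (p z - D z) - ln c) = exp (lam * (p z - D z)) / c"
      using c by (simp only: exp_diff) simp
    show ?thesis using 1 unfolding lq e L_def by (simp add: algebra_simps)
  qed
  have pwe: "ennreal lam * (ennreal (q z) * ennreal (p z)) + ennreal (q z)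
      \<le> ennreal L * ennreal (q z) + ennreal (1 / c) * ennreal (exp (lam * (p z - D z)))" for z
  proof -
    have "ennreal lam * (ennreal (q z) * ennreal (p z)) + ennreal (q z) = ennreal (lam * p z * q z + q z)"
      using lam pnn[of z] qpos[of z]
      by (subst ennreal_plus) (auto simp: ennreal_mult'[symmetric] mult_nonneg_nonneg mult_ac)
    also have "\<dots> \<le> ennreal (q z * L + exp (lam * (p z - D z)) / c)"
      using pw by (rule ennreal_leI)
    also have "\<dots> = ennreal L * ennreal (q z) + ennreal (1 / c) * ennreal (exp (lam * (p z - D z)))"
      using L qpos[of z] c
      by (subst ennreal_plus) (auto simp: ennreal_mult'[symmetric] mult_nonneg_nonneg mult_ac)
    finally show ?thesis .
  qed
  have qint: "(\<integral>\<^sup>+ z. ennreal (q z) \<partial>M) = 1"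
  proof -
    have "integrable M q" unfolding q_def using eint by auto
    then have "(\<integral>\<^sup>+ z. ennreal (q z) \<partial>M) = ennreal (integral\<^sup>L M q)"
      by (rule nn_integral_eq_integral) (use qpos in \<open>auto intro: less_imp_le\<close>)
    also have "integral\<^sup>L M q = 1" unfolding q_def using Zpos by (simp add: Zr_def)
    finally show ?thesis by simp
  qed
  define X where "X = (\<integral>\<^sup>+ z. ennreal (q z) * ennreal (p z) \<partial>M)"
  have "ennreal lam * X + 1 = (\<integral>\<^sup>+ z. ennreal lam * (ennreal (q z) * ennreal (p z)) + ennreal (q z) \<partial>M)"
    unfolding X_def qint[symmetric]
    by (subst nn_integral_add) (auto simp: nn_integral_cmult)
  also have "\<dots> \<le> (\<integral>\<^sup>+ z. ennreal L * ennreal (q z) + ennreal (1 / c) * ennreal (exp (lam * (p z - D z))) \<partial>M)"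
    by (rule nn_integral_mono) (rule pwe)
  also have "\<dots> = ennreal L * 1 + ennreal (1 / c) * (\<integral>\<^sup>+ z. ennreal (exp (lam * (p z - D z))) \<partial>M)"
    unfolding qint[symmetric]
    by (subst nn_integral_add) (auto simp: nn_integral_cmult)
  also have "\<dots> \<le> ennreal L + ennreal (1 / c) * ennreal c"
    by (intro add_mono mult_left_mono B1) auto
  also have "ennreal (1 / c) * ennreal c = 1" using c by (simp add: ennreal_mult[symmetric])
  finally have "ennreal lam * X + 1 \<le> ennreal L + 1" .
  then have "ennreal lam * X \<le> ennreal L"
    using ennreal_add_left_cancel_le[of 1] by (simp add: add.commute)
  then have "ennreal (1 / lam) * (ennreal lam * X) \<le> ennreal (1 / lam) * ennreal L"
    by (rule mult_left_mono) auto
  moreover have "ennreal (1 / lam) * ennreal lam = 1" using lam by (simp flip: ennreal_mult)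
  moreover have "ennreal (1 / lam) * ennreal L = ennreal (L / lam)" using lam L by (simp flip: ennreal_mult)
  ultimately have "X \<le> ennreal (L / lam)" by (simp add: mult.assoc[symmetric])
  then show ?thesis unfolding X_def q_def L_def Zr_def .
qed

lemma measurable_exp_neg_shift[measurable (raw)]:
  assumes [measurable]: "f \<in> borel_measurable M" "g \<in> borel_measurable M"
  shows "(\<lambda>x. exp_neg_shift l (f x) (g x)) \<in> borel_measurable M"
  unfolding exp_neg_shift_def by measurable

lemma measurable_exp_pos_shift[measurable (raw)]:
  assumes [measurable]: "f \<in> borel_measurable M" "g \<in> borel_measurable M"
  shows "(\<lambda>x. exp_pos_shift l (f x) (g x)) \<in> borel_measurable M"
  unfolding exp_pos_shift_def by measurable

lemma core:
  fixes M :: "'a measure" and D :: "'a \<Rightarrow> real" and PDz :: "'a \<Rightarrow> ennreal" and \<rho> :: "'a measure"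
  assumes M: "prob_space M"
    and Dm[measurable]: "D \<in> borel_measurable M" and PDm[measurable]: "PDz \<in> borel_measurable M"
    and Dnn: "\<And>z. 0 \<le> D z" and lam: "0 < lam" and c: "1 \<le> c"
    and B1: "(\<integral>\<^sup>+ z. exp_neg_shift lam (D z) (PDz z) \<partial>M) \<le> ennreal c"
    and B2: "(\<integral>\<^sup>+ z. exp_pos_shift lam (D z) (PDz z) \<partial>M) \<le> ennreal c"
    and rho: "prob_space \<rho>" "sets \<rho> = sets M"
  shows "(\<integral>\<^sup>+ z. PDz z \<partial>density M (\<lambda>z. ennreal (exp (- lam * D z)) / (\<integral>\<^sup>+ z. ennreal (exp (- lam * D z)) \<partial>M)))
       \<le> (\<integral>\<^sup>+ z. PDz z \<partial>\<rho>) + ennreal (2 / lam) * KLdiv \<rho> M + ennreal (2 * ln c / lam)"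
proof -
  interpret prob_space M by fact
  define p where "p z = enn2real (PDz z)" for z
  have pm[measurable]: "p \<in> borel_measurable M" unfolding p_def by measurable
  have pnn: "0 \<le> p z" for z unfolding p_def by simp
  define Zr where "Zr = integral\<^sup>L M (\<lambda>z. exp (- lam * D z))"
  have eint: "integrable M (\<lambda>z. exp (- lam * D z))"
    by (rule integrable_const_bound[where B=1]) (use lam Dnn in \<open>auto simp: mult_nonneg_nonneg\<close>)
  have Zpos: "0 < Zr" unfolding Zr_def
    using integral_less_AE_space[of "\<lambda>_. 0" "\<lambda>z. exp (- lam * D z)"] eint emeasure_space_1 by simp
  have Zen: "(\<integral>\<^sup>+ z. ennreal (exp (- lam * D z)) \<partial>M) = ennreal Zr"
    unfolding Zr_def by (rule nn_integral_eq_integral[OF eint]) auto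
  have "AE z in M. exp_pos_shift lam (D z) (PDz z) \<noteq> \<infinity>"
    by (rule nn_integral_PInf_AE) (use B2 in \<open>auto simp: top_unique\<close>)
  then have AEfin: "AE z in M. PDz z \<noteq> \<infinity>"
    by eventually_elim (auto simp: exp_pos_shift_def split: if_splits)
  then have AEp: "AE z in M. PDz z = ennreal (p z)"
    by eventually_elim (auto simp: p_def less_top ennreal_enn2real)
  have B1': "(\<integral>\<^sup>+ z. ennreal (exp (lam * (p z - D z))) \<partial>M) \<le> ennreal c"
  proof -
    have "(\<integral>\<^sup>+ z. ennreal (exp (lam * (p z - D z))) \<partial>M) = (\<integral>\<^sup>+ z. exp_neg_shift lam (D z) (PDz z) \<partial>M)"
      using AEfin by (intro nn_integral_cong_AE) (auto simp: exp_neg_shift_def p_def algebra_simps)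
    then show ?thesis using B1 by simp
  qed
  have B2': "(\<integral>\<^sup>+ z. ennreal (exp (lam * (D z - p z))) \<partial>M) \<le> ennreal c"
  proof -
    have "(\<integral>\<^sup>+ z. ennreal (exp (lam * (D z - p z))) \<partial>M) \<le> (\<integral>\<^sup>+ z. exp_pos_shift lam (D z) (PDz z) \<partial>M)"
      by (intro nn_integral_mono) (auto simp: exp_pos_shift_def p_def algebra_simps)
    then show ?thesis using B2 by simp
  qed
  have S1': "(\<integral>\<^sup>+ z. ennreal (exp (- lam * D z) / Zr) * ennreal (p z) \<partial>M) \<le> ennreal ((ln c - ln Zr) / lam)"
    unfolding Zr_def by (rule S1[OF M Dm pm Dnn pnn lam c B1'])
  have LHS: "(\<integral>\<^sup>+ z. PDz z \<partial>density M (\<lambda>z. ennreal (exp (- lam * D z)) / (\<integral>\<^sup>+ z. ennreal (exp (- lam * D z)) \<partial>M)))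
     \<le> ennreal ((ln c - ln Zr) / lam)"
  proof -
    have "(\<integral>\<^sup>+ z. PDz z \<partial>density M (\<lambda>z. ennreal (exp (- lam * D z)) / (\<integral>\<^sup>+ z. ennreal (exp (- lam * D z)) \<partial>M)))
       = (\<integral>\<^sup>+ z. (ennreal (exp (- lam * D z)) / ennreal Zr) * PDz z \<partial>M)"
      unfolding Zen by (subst nn_integral_density) auto
    also have "\<dots> = (\<integral>\<^sup>+ z. ennreal (exp (- lam * D z) / Zr) * ennreal (p z) \<partial>M)"
      using AEp by (intro nn_integral_cong_AE) (auto simp: divide_ennreal Zpos)
    finally show ?thesis using S1' by simp
  qed
  show ?thesis
  proof (cases "(\<integral>\<^sup>+ z. PDz z \<partial>\<rho>) = \<infinity> \<or> KLdiv \<rho> M = \<infinity>")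
    case True
    then show ?thesis using lam by (auto simp: ennreal_mult_eq_top_iff)
  next
    case False
    then have Rfin: "(\<integral>\<^sup>+ z. PDz z \<partial>\<rho>) \<noteq> \<infinity>" and Kfin: "KLdiv \<rho> M \<noteq> \<infinity>" by auto
    from Kfin have ac: "absolutely_continuous M \<rho>" and sr: "sets \<rho> = sets M"
      and ed: "integrable \<rho> (entropy_density (exp 1) M \<rho>)"
      and Keq: "KLdiv \<rho> M = ennreal (KL_divergence (exp 1) M \<rho>)"
      unfolding KLdiv_def by (auto split: if_splits)
    interpret R: prob_space \<rho> by fact
    define r where "r z = enn2real (RN_deriv M \<rho> z)" for z
    have rm[measurable]: "r \<in> borel_measurable M" unfolding r_def by measurable
    have rnn: "0 \<le> r z" for z unfolding r_def by simp
    have "AE z in M. RN_deriv M \<rho> z \<noteq> \<infinity>"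
      by (rule RN_deriv_finite[OF _ ac sr]) (rule R.sigma_finite_measure_axioms)
    then have "density M (RN_deriv M \<rho>) = density M (\<lambda>z. ennreal (r z))"
      by (intro density_cong) (auto simp: r_def less_top ennreal_enn2real)
    then have rho_eq: "\<rho> = density M (\<lambda>z. ennreal (r z))"
      using density_RN_deriv[OF ac sr] by simp
    have ent: "entropy_density (exp 1) M \<rho> z = ln (r z)" for z
      by (simp add: entropy_density_def r_def log_def)
    have rl: "integrable M (\<lambda>z. r z * ln (r z))"
      using ed unfolding ent[abs_def] using integrable_density[of "\<lambda>z. ln (r z)" M r] rho_eq rnn by simp
    have KLr: "KL_divergence (exp 1) M \<rho> = integral\<^sup>L M (\<lambda>z. r z * ln (r z))"
      unfolding KL_divergence_def ent[abs_def]
      by (subst rho_eq) (subst integral_density, auto simp: rnn)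
    have r1: "(\<integral>\<^sup>+ z. ennreal (r z) \<partial>M) = 1"
    proof -
      have "emeasure \<rho> (space M) = 1" using R.emeasure_space_1 sr sets_eq_imp_space_eq by metis
      then have "emeasure (density M (\<lambda>z. ennreal (r z))) (space M) = 1" using rho_eq by simp
      then have "(\<integral>\<^sup>+ z. ennreal (r z) * indicator (space M) z \<partial>M) = 1"
        by (subst (asm) emeasure_density) auto
      moreover have "(\<integral>\<^sup>+ z. ennreal (r z) * indicator (space M) z \<partial>M) = (\<integral>\<^sup>+ z. ennreal (r z) \<partial>M)"
        by (intro nn_integral_cong) auto
      ultimately show ?thesis by simp
    qed
    have rint: "integrable M r" by (rule integrableI_nonneg) (auto simp: r1 rnn)
    have rint1: "integral\<^sup>L M r = 1"
      by (subst integral_eq_nn_integral) (auto simp: r1 rnn)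
    have "AE z in \<rho>. PDz z = ennreal (p z)"
      by (rule absolutely_continuous_AE[OF sr ac AEp])
    then have "(\<integral>\<^sup>+ z. PDz z \<partial>\<rho>) = (\<integral>\<^sup>+ z. ennreal (p z) \<partial>\<rho>)"
      by (rule nn_integral_cong_AE)
    also have "\<dots> = (\<integral>\<^sup>+ z. ennreal (r z * p z) \<partial>M)"
      by (subst rho_eq) (auto simp: nn_integral_density ennreal_mult rnn pnn intro!: nn_integral_cong)
    finally have Req: "(\<integral>\<^sup>+ z. PDz z \<partial>\<rho>) = (\<integral>\<^sup>+ z. ennreal (r z * p z) \<partial>M)" .
    have rp: "integrable M (\<lambda>z. r z * p z)"
      by (rule integrableI_nonneg) (use Req Rfin in \<open>auto simp: rnn pnn less_top\<close>)
    define Rr where "Rr = integral\<^sup>L M (\<lambda>z. r z * p z)"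
    have Rr: "(\<integral>\<^sup>+ z. PDz z \<partial>\<rho>) = ennreal Rr" unfolding Req Rr_def
      by (rule nn_integral_eq_integral[OF rp]) (auto simp: rnn pnn)
    have Rnn: "0 \<le> Rr" unfolding Rr_def by (auto simp: rnn pnn)
    define KL where "KL = KL_divergence (exp 1) M \<rho>"
    have S2': "- ln Zr \<le> lam * Rr + 2 * KL + ln c"
      unfolding Zr_def Rr_def KL_def KLr
      by (rule S2[OF M Dm pm rm Dnn rnn lam c rint1 rint rp rl B2'])
    have "(ln c - ln Zr) / lam \<le> Rr + 2 / lam * max 0 KL + 2 * ln c / lam"
    proof -
      have "ln c - ln Zr \<le> lam * Rr + 2 * max 0 KL + 2 * ln c" using S2' by simp
      then have "(ln c - ln Zr) / lam \<le> (lam * Rr + 2 * max 0 KL + 2 * ln c) / lam"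
        using lam by (simp add: divide_right_mono)
      also have "\<dots> = Rr + 2 / lam * max 0 KL + 2 * ln c / lam" using lam by (simp add: field_simps)
      finally show ?thesis .
    qed
    then have "ennreal ((ln c - ln Zr) / lam) \<le> ennreal (Rr + 2 / lam * max 0 KL + 2 * ln c / lam)"
      by (rule ennreal_leI)
    also have "\<dots> = ennreal Rr + ennreal (2 / lam) * ennreal (max 0 KL) + ennreal (2 * ln c / lam)"
    proof -
      have a: "0 \<le> 2 / lam * max 0 KL" using lam by simp
      have b: "0 \<le> 2 * ln c / lam" using lam c by simp
      have "ennreal (Rr + 2 / lam * max 0 KL + 2 * ln c / lam) = ennreal (Rr + 2 / lam * max 0 KL) + ennreal (2 * ln c / lam)"
        using Rnn a b by (intro ennreal_plus) auto
      also have "ennreal (Rr + 2 / lam * max 0 KL) = ennreal Rr + ennreal (2 / lam * max 0 KL)"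
        using Rnn a by (intro ennreal_plus) auto
      also have "ennreal (2 / lam * max 0 KL) = ennreal (2 / lam) * ennreal (max 0 KL)"
        using lam by (intro ennreal_mult) auto
      finally show ?thesis .
    qed
    also have "\<dots> = (\<integral>\<^sup>+ z. PDz z \<partial>\<rho>) + ennreal (2 / lam) * KLdiv \<rho> M + ennreal (2 * ln c / lam)"
      by (simp add: Rr Keq KL_def ennreal_max_0)
    finally show ?thesis using LHS by (rule order.trans[rotated])
  qed
qed

lemma INF_add_const_bound:
  fixes a C :: ennreal and T :: "'b \<Rightarrow> ennreal"
  assumes "\<And>x. x \<in> S \<Longrightarrow> a \<le> T x + C"
  shows "a \<le> (INF x\<in>S. T x) + C"
proof (cases "C = \<infinity> \<or> a \<le> C")
  case True
  then show ?thesis by (auto intro: order.trans[OF _ add_increasing[OF zero_le]])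
next
  case False
  then have C: "C \<noteq> \<infinity>" and aC: "C \<le> a" by auto
  have "a - C \<le> T x" if "x \<in> S" for x
    using assms[OF that] C by (auto simp: ennreal_minus_le_iff add.commute)
  then have "a - C \<le> (INF x\<in>S. T x)" by (rule INF_greatest)
  then have "a - C + C \<le> (INF x\<in>S. T x) + C" by (rule add_right_mono)
  then show ?thesis using diff_add_cancel_ennreal[OF aC] by simp
qed



theorem mainTheorem5:
  fixes prior :: "'t measure"
    and MX :: "'x measure" and PY :: "'y measure"
    and K :: "'t \<Rightarrow> (nat \<Rightarrow> 'x) measure"
    and SX :: "(nat \<Rightarrow> 'x) \<Rightarrow> 's::{metric_space, second_countable_topology}"
    and SY :: "(nat \<Rightarrow> 'y) \<Rightarrow> 's"
    and f :: "nat \<Rightarrow> real \<Rightarrow> real"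
    and I :: "real set"
    and n :: nat and lam \<epsilon> :: real
  defines "Xn \<equiv> PiM {..<n} (\<lambda>_. MX)"
    and "P \<equiv> PiM {..<n} (\<lambda>_. PY)"
  assumes prior: "prob_space prior"
    and PY: "prob_space PY"
    and K: "K \<in> prior \<rightarrow>\<^sub>M prob_algebra Xn"
    and SX: "SX \<in> borel_measurable Xn"
    and SY: "SY \<in> borel_measurable P"
    and I: "I \<subseteq> {0<..}"
    and f_nonneg: "\<forall>m. \<forall>l\<in>I. 0 \<le> f m l"
    and A1: "\<forall>l\<in>I.
        (\<integral>\<^sup>+ \<theta>. \<integral>\<^sup>+ x. \<integral>\<^sup>+ y. exp_neg_shift l (dist (SX x) (SY y)) (PD P SX SY x) \<partial>P \<partial>K \<theta> \<partial>prior)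
          \<le> ennreal (exp (f n l))
      \<and> (\<integral>\<^sup>+ \<theta>. \<integral>\<^sup>+ x. \<integral>\<^sup>+ y. exp_pos_shift l (dist (SX x) (SY y)) (PD P SX SY x) \<partial>P \<partial>K \<theta> \<partial>prior)
          \<le> ennreal (exp (f n l))"
    and lam: "lam \<in> I"
    and n: "1 \<le> n"
    and eps: "0 < \<epsilon>" "\<epsilon> < 1"
  shows "\<exists>A \<in> sets P. measure P A \<ge> 1 - \<epsilon> \<and>
    (\<forall>y\<in>A.
      (\<integral>\<^sup>+ z. PD P SX SY (snd z) \<partial>abc_post (joint prior K Xn) SX SY lam y)
      \<le> (INF \<rho>\<in>{\<rho>. prob_space \<rho> \<and> sets \<rho> = sets (prior \<Otimes>\<^sub>M Xn)}.
            (\<integral>\<^sup>+ z. PD P SX SY (snd z) \<partial>\<rho>) + ennreal (2 / lam) * KLdiv \<rho> (joint prior K Xn))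
        + ennreal (2 * f n lam / lam) + ennreal (2 / lam * ln (2 / \<epsilon>)))"
proof -
  interpret prior: prob_space prior by fact
  interpret PY: prob_space PY by fact
  have Pprob: "prob_space P" unfolding P_def by (intro prob_space_PiM) (auto intro: PY)
  interpret P: prob_space P by fact
  have lam0: "0 < lam" using lam I by auto
  have f0: "0 \<le> f n lam" using f_nonneg lam by auto
  define PX where "PX = prior \<Otimes>\<^sub>M Xn"
  define J where "J = joint prior K Xn"
  define inner where "inner \<theta> = K \<theta> \<bind> (\<lambda>x. return PX (\<theta>, x))" for \<theta>
  have J_def': "J = prior \<bind> inner" unfolding J_def joint_def inner_def PX_def ..
  have inner_m: "inner \<in> prior \<rightarrow>\<^sub>M prob_algebra PX"
    unfolding inner_def
    by (rule measurable_bind_prob_space2[OF K]) (simp add: PX_def[symmetric] measurable_return_prob_space)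
  have prior_sp: "prior \<in> space (prob_algebra prior)" using prior by (simp add: space_prob_algebra)
  have Jprob: "prob_space J" unfolding J_def' by (rule prob_space_bind'[OF prior_sp inner_m])
  have sets_J: "sets J = sets PX" unfolding J_def' by (rule sets_bind'[OF prior_sp inner_m])
  interpret J: prob_space J by fact
  have sets_K: "sets (K \<theta>) = sets Xn" if "\<theta> \<in> space prior" for \<theta>
    using measurable_space[OF K that] by (simp add: space_prob_algebra)
  have space_K: "space (K \<theta>) = space Xn" if "\<theta> \<in> space prior" for \<theta>
    using sets_K[OF that] by (rule sets_eq_imp_space_eq)
  have J_int: "(\<integral>\<^sup>+ z. H (snd z) \<partial>J) = (\<integral>\<^sup>+ \<theta>. \<integral>\<^sup>+ x. H x \<partial>K \<theta> \<partial>prior)"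
    if Hm[measurable]: "H \<in> borel_measurable Xn" for H
  proof -
    have Hm': "(\<lambda>z. H (snd z)) \<in> borel_measurable PX" unfolding PX_def by measurable
    have "(\<integral>\<^sup>+ z. H (snd z) \<partial>J) = (\<integral>\<^sup>+ \<theta>. \<integral>\<^sup>+ z. H (snd z) \<partial>inner \<theta> \<partial>prior)"
      unfolding J_def' by (rule nn_integral_bind[OF Hm' measurable_prob_algebraD[OF inner_m]])
    also have "\<dots> = (\<integral>\<^sup>+ \<theta>. \<integral>\<^sup>+ x. H x \<partial>K \<theta> \<partial>prior)"
    proof (intro nn_integral_cong)
      fix \<theta> assume th: "\<theta> \<in> space prior"
      have rm: "(\<lambda>x. return PX (\<theta>, x)) \<in> K \<theta> \<rightarrow>\<^sub>M subprob_algebra PX"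
        unfolding measurable_cong_sets[OF sets_K[OF th] refl] PX_def using th by measurable
      have "(\<integral>\<^sup>+ z. H (snd z) \<partial>inner \<theta>) = (\<integral>\<^sup>+ x. \<integral>\<^sup>+ z. H (snd z) \<partial>return PX (\<theta>, x) \<partial>K \<theta>)"
        unfolding inner_def by (rule nn_integral_bind[OF Hm' rm])
      also have "\<dots> = (\<integral>\<^sup>+ x. H x \<partial>K \<theta>)"
        by (intro nn_integral_cong) (subst nn_integral_return, auto simp: PX_def space_pair_measure space_K[OF th] th Hm')
      finally show "(\<integral>\<^sup>+ z. H (snd z) \<partial>inner \<theta>) = (\<integral>\<^sup>+ x. H x \<partial>K \<theta>)" .
    qed
    finally show ?thesis .
  qed
  note SX[measurable] SY[measurable]
  have PDm[measurable]: "PD P SX SY \<in> borel_measurable Xn"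
    unfolding PD_def[abs_def] by measurable
  define E1 where "E1 x y = exp_neg_shift lam (dist (SX x) (SY y)) (PD P SX SY x)" for x y
  define E2 where "E2 x y = exp_pos_shift lam (dist (SX x) (SY y)) (PD P SX SY x)" for x y
  have E1m[measurable]: "case_prod E1 \<in> borel_measurable (Xn \<Otimes>\<^sub>M P)" unfolding E1_def by measurable
  have E2m[measurable]: "case_prod E2 \<in> borel_measurable (Xn \<Otimes>\<^sub>M P)" unfolding E2_def by measurable
  define G1 where "G1 y = (\<integral>\<^sup>+ z. E1 (snd z) y \<partial>J)" for y
  define G2 where "G2 y = (\<integral>\<^sup>+ z. E2 (snd z) y \<partial>J)" for y
  interpret JP: pair_sigma_finite J P
    by (intro pair_sigma_finite.intro J.sigma_finite_measure_axioms P.sigma_finite_measure_axioms)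
  have cong: "sets (J \<Otimes>\<^sub>M P) = sets (PX \<Otimes>\<^sub>M P)" by (rule sets_pair_measure_cong[OF sets_J refl])
  have G_bound: "(\<integral>\<^sup>+ y. (\<integral>\<^sup>+ z. E (snd z) y \<partial>J) \<partial>P) \<le> ennreal (exp (f n lam))"
    if Em[measurable]: "case_prod E \<in> borel_measurable (Xn \<Otimes>\<^sub>M P)"
    and A: "(\<integral>\<^sup>+ \<theta>. \<integral>\<^sup>+ x. \<integral>\<^sup>+ y. E x y \<partial>P \<partial>K \<theta> \<partial>prior) \<le> ennreal (exp (f n lam))" for E
  proof -
    have m1: "(\<lambda>(z, y). E (snd z) y) \<in> borel_measurable (J \<Otimes>\<^sub>M P)"
      unfolding measurable_cong_sets[OF cong refl] PX_def by measurable
    have "(\<integral>\<^sup>+ y. (\<integral>\<^sup>+ z. E (snd z) y \<partial>J) \<partial>P) = (\<integral>\<^sup>+ z. (\<integral>\<^sup>+ y. E (snd z) y \<partial>P) \<partial>J)"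
      by (rule JP.Fubini') (use m1 in \<open>simp add: case_prod_beta\<close>)
    also have "\<dots> = (\<integral>\<^sup>+ \<theta>. \<integral>\<^sup>+ x. \<integral>\<^sup>+ y. E x y \<partial>P \<partial>K \<theta> \<partial>prior)"
      by (rule J_int) measurable
    finally show ?thesis using A by simp
  qed
  have intG1: "(\<integral>\<^sup>+ y. G1 y \<partial>P) \<le> ennreal (exp (f n lam))"
    unfolding G1_def by (rule G_bound[OF E1m]) (use A1 lam in \<open>auto simp: E1_def\<close>)
  have intG2: "(\<integral>\<^sup>+ y. G2 y \<partial>P) \<le> ennreal (exp (f n lam))"
    unfolding G2_def by (rule G_bound[OF E2m]) (use A1 lam in \<open>auto simp: E2_def\<close>)
  have G1m[measurable]: "G1 \<in> borel_measurable P"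
  proof -
    have "(\<lambda>(y, z). E1 (snd z) y) \<in> borel_measurable (P \<Otimes>\<^sub>M J)"
      unfolding measurable_cong_sets[OF sets_pair_measure_cong[OF refl sets_J] refl] PX_def by measurable
    then show ?thesis unfolding G1_def by measurable
  qed
  have G2m[measurable]: "G2 \<in> borel_measurable P"
  proof -
    have "(\<lambda>(y, z). E2 (snd z) y) \<in> borel_measurable (P \<Otimes>\<^sub>M J)"
      unfolding measurable_cong_sets[OF sets_pair_measure_cong[OF refl sets_J] refl] PX_def by measurable
    then show ?thesis unfolding G2_def by measurable
  qed
  define c where "c = 2 * exp (f n lam) / \<epsilon>"
  have c0: "0 < c" using eps by (simp add: c_def)
  have c1: "1 \<le> c"
  proof -
    have "1 \<le> exp (f n lam)" using f0 by simp
    then have "\<epsilon> \<le> 2 * exp (f n lam)" using eps by linarith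
    then show ?thesis using eps by (simp add: c_def field_simps)
  qed
  have cf: "ennreal (1 / c) * ennreal (exp (f n lam)) = ennreal (\<epsilon> / 2)"
    using c0 eps by (simp add: c_def flip: ennreal_mult)
  have Markov: "emeasure P {y \<in> space P. 1 \<le> ennreal (1 / c) * G y} \<le> ennreal (\<epsilon> / 2)"
    if [measurable]: "G \<in> borel_measurable P" and iG: "(\<integral>\<^sup>+ y. G y \<partial>P) \<le> ennreal (exp (f n lam))" for G
  proof -
    have "emeasure P {y \<in> space P. 1 \<le> ennreal (1 / c) * G y} \<le> ennreal (1 / c) * (\<integral>\<^sup>+ y. G y * indicator (space P) y \<partial>P)"
      by (rule nn_integral_Markov_inequality) auto
    also have "(\<integral>\<^sup>+ y. G y * indicator (space P) y \<partial>P) = (\<integral>\<^sup>+ y. G y \<partial>P)"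
      by (intro nn_integral_cong) auto
    also have "ennreal (1 / c) * \<dots> \<le> ennreal (1 / c) * ennreal (exp (f n lam))"
      by (intro mult_left_mono iG) auto
    finally show ?thesis using cf by simp
  qed
  define N1 where "N1 = {y \<in> space P. 1 \<le> ennreal (1 / c) * G1 y}"
  define N2 where "N2 = {y \<in> space P. 1 \<le> ennreal (1 / c) * G2 y}"
  have N1[measurable]: "N1 \<in> sets P" unfolding N1_def by measurable
  have N2[measurable]: "N2 \<in> sets P" unfolding N2_def by measurable
  have mN1: "measure P N1 \<le> \<epsilon> / 2"
    using Markov[OF G1m intG1] eps unfolding N1_def[symmetric] by (simp add: P.emeasure_eq_measure)
  have mN2: "measure P N2 \<le> \<epsilon> / 2"
    using Markov[OF G2m intG2] eps unfolding N2_def[symmetric] by (simp add: P.emeasure_eq_measure)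
  define A where "A = space P - (N1 \<union> N2)"
  have A_sets: "A \<in> sets P" unfolding A_def by measurable
  have mA: "measure P A \<ge> 1 - \<epsilon>"
  proof -
    have "measure P A = 1 - measure P (N1 \<union> N2)" unfolding A_def by (rule P.prob_compl) auto
    moreover have "measure P (N1 \<union> N2) \<le> measure P N1 + measure P N2"
      by (rule measure_Un_le) auto
    ultimately show ?thesis using mN1 mN2 by simp
  qed
  have small: "x \<le> ennreal c" if "\<not> 1 \<le> ennreal (1 / c) * x" for x
  proof -
    have "x = ennreal c * (ennreal (1 / c) * x)"
      using c0 by (simp add: mult.assoc[symmetric] flip: ennreal_mult)
    also have "\<dots> \<le> ennreal c * 1" using that by (intro mult_left_mono) auto
    finally show ?thesis by simp
  qed
  have split: "ennreal (2 * ln c / lam) = ennreal (2 * f n lam / lam) + ennreal (2 / lam * ln (2 / \<epsilon>))"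
  proof -
    have "ln c = f n lam + ln (2 / \<epsilon>)" using eps by (simp add: c_def ln_div ln_mult)
    then have "2 * ln c / lam = 2 * f n lam / lam + 2 / lam * ln (2 / \<epsilon>)" by (simp add: add_divide_distrib)
    moreover have "0 \<le> 2 * f n lam / lam" using f0 lam0 by simp
    moreover have "0 \<le> 2 / lam * ln (2 / \<epsilon>)" using lam0 eps by simp
    ultimately show ?thesis by (simp add: ennreal_plus)
  qed
  show ?thesis
  proof (rule bexI[OF _ A_sets], intro conjI mA ballI)
    fix y assume yA: "y \<in> A"
    then have yP: "y \<in> space P" and y1: "y \<notin> N1" and y2: "y \<notin> N2" unfolding A_def by auto
    have B1: "G1 y \<le> ennreal c" using y1 yP unfolding N1_def by (intro small) auto
    have B2: "G2 y \<le> ennreal c" using y2 yP unfolding N2_def by (intro small) auto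
    have Dm: "(\<lambda>z. dist (SX (snd z)) (SY y)) \<in> borel_measurable J"
      unfolding measurable_cong_sets[OF sets_J refl] PX_def by measurable
    have PDzm: "(\<lambda>z. PD P SX SY (snd z)) \<in> borel_measurable J"
      unfolding measurable_cong_sets[OF sets_J refl] PX_def by measurable
    have bound: "(\<integral>\<^sup>+ z. PD P SX SY (snd z) \<partial>abc_post (joint prior K Xn) SX SY lam y)
       \<le> (\<integral>\<^sup>+ z. PD P SX SY (snd z) \<partial>\<rho>) + ennreal (2 / lam) * KLdiv \<rho> (joint prior K Xn)
         + (ennreal (2 * f n lam / lam) + ennreal (2 / lam * ln (2 / \<epsilon>)))"
      if "\<rho> \<in> {\<rho>. prob_space \<rho> \<and> sets \<rho> = sets (prior \<Otimes>\<^sub>M Xn)}" for \<rho>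
    proof -
      from that have rho: "prob_space \<rho>" "sets \<rho> = sets J" using sets_J by (auto simp: PX_def)
      have "(\<integral>\<^sup>+ z. PD P SX SY (snd z) \<partial>density J (\<lambda>z. ennreal (exp (- lam * dist (SX (snd z)) (SY y))) /
             (\<integral>\<^sup>+ z. ennreal (exp (- lam * dist (SX (snd z)) (SY y))) \<partial>J)))
         \<le> (\<integral>\<^sup>+ z. PD P SX SY (snd z) \<partial>\<rho>) + ennreal (2 / lam) * KLdiv \<rho> J + ennreal (2 * ln c / lam)"
        by (rule core[OF Jprob Dm PDzm _ lam0 c1 _ _ rho])
           (use B1 B2 in \<open>auto simp: G1_def G2_def E1_def E2_def\<close>)
      then show ?thesis unfolding split abc_post_def Zconst_def J_def by simp
    qed
    have "(\<integral>\<^sup>+ z. PD P SX SY (snd z) \<partial>abc_post (joint prior K Xn) SX SY lam y)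
      \<le> (INF \<rho>\<in>{\<rho>. prob_space \<rho> \<and> sets \<rho> = sets (prior \<Otimes>\<^sub>M Xn)}.
            (\<integral>\<^sup>+ z. PD P SX SY (snd z) \<partial>\<rho>) + ennreal (2 / lam) * KLdiv \<rho> (joint prior K Xn))
        + (ennreal (2 * f n lam / lam) + ennreal (2 / lam * ln (2 / \<epsilon>)))"
      by (rule INF_add_const_bound) (rule bound)
    then show "(\<integral>\<^sup>+ z. PD P SX SY (snd z) \<partial>abc_post (joint prior K Xn) SX SY lam y)
      \<le> (INF \<rho>\<in>{\<rho>. prob_space \<rho> \<and> sets \<rho> = sets (prior \<Otimes>\<^sub>M Xn)}.
            (\<integral>\<^sup>+ z. PD P SX SY (snd z) \<partial>\<rho>) + ennreal (2 / lam) * KLdiv \<rho> (joint prior K Xn))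
        + ennreal (2 * f n lam / lam) + ennreal (2 / lam * ln (2 / \<epsilon>))"
      by (simp add: add.assoc)
  qed
qed


end
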